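(* Let $p$ be a prime, $q$ a power of $p$, and $F$ a field of characteristic $p$ containing $\mathbb{F}_q$. Let $L\in F[x]$ be a monic $q$-polynomial of $q$-degree $n\ge1$ whose coefficient of $x$ equals $(-1)^n$, let $E$ be its splitting field over $F$, and let $G=\mathrm{Gal}(E/F)$, regarded as a subgroup of $GL(n,q)$ via its linear action on the $\mathbb{F}_q$-space of roots of $L$. Then $\det\sigma=1$ for all $\sigma\in G$; thus $G$ is a subgroup of $SL(n,q)$.
   Context: A $q$-polynomial over $F$ is a polynomial $\sum_{i=0}^n a_i x^{q^i}\in F[x]$; with $a_n\ne0$ its $q$-degree is $n$. When the coefficient of $x$ is nonzero, the roots of $L$ in $E$ are distinct and form an $n$-dimensional $\mathbb{F}_q$-vector space on which $G$ acts $\mathbb{F}_q$-linearly. *)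

theory Defs
  imports "HOL-Computational_Algebra.Polynomial" "Jordan_Normal_Form.Determinant"
begin

definition is_subfield :: "'a::field set \<Rightarrow> bool" where
  "is_subfield K \<longleftrightarrow> 0 \<in> K \<and> 1 \<in> K \<and>
     (\<forall>x\<in>K. \<forall>y\<in>K. x + y \<in> K \<and> x - y \<in> K \<and> x * y \<in> K) \<and>
     (\<forall>x\<in>K. x \<noteq> 0 \<longrightarrow> inverse x \<in> K)"

definition gen_field :: "'a::field set \<Rightarrow> 'a set" where
  "gen_field S = \<Inter> {K. is_subfield K \<and> S \<subseteq> K}"

definition qpoly :: "(nat \<Rightarrow> 'a::comm_ring_1) \<Rightarrow> nat \<Rightarrow> nat \<Rightarrow> 'a poly" where
  "qpoly a q n = (\<Sum>i\<le>n. monom (a i) (q ^ i))"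

definition splits :: "'a::field poly \<Rightarrow> bool" where
  "splits P \<longleftrightarrow> (\<exists>rs. P = prod_list (map (\<lambda>r. [:- r, 1:]) rs))"

text \<open>Gal(E/F): field automorphisms of E fixing F pointwise (only their values on E matter).\<close>
definition galois_group :: "'a::field set \<Rightarrow> 'a set \<Rightarrow> ('a \<Rightarrow> 'a) set" where
  "galois_group E F = {\<sigma>. bij_betw \<sigma> E E \<and>
      (\<forall>x\<in>E. \<forall>y\<in>E. \<sigma> (x + y) = \<sigma> x + \<sigma> y \<and> \<sigma> (x * y) = \<sigma> x * \<sigma> y) \<and>
      (\<forall>x\<in>F. \<sigma> x = x)}"

definition Fq :: "nat \<Rightarrow> 'a::field set" where
  "Fq q = {x. x ^ q = x}"

definition is_Fq_basis :: "nat \<Rightarrow> 'a::field set \<Rightarrow> 'a list \<Rightarrow> bool" where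
  "is_Fq_basis q V bs \<longleftrightarrow> set bs \<subseteq> V \<and>
     (\<forall>c. (\<forall>i<length bs. c i \<in> Fq q) \<longrightarrow> (\<Sum>i<length bs. c i * bs ! i) = 0 \<longrightarrow> (\<forall>i<length bs. c i = 0)) \<and>
     (\<forall>v\<in>V. \<exists>c. (\<forall>i<length bs. c i \<in> Fq q) \<and> v = (\<Sum>i<length bs. c i * bs ! i))"

definition is_matrix_wrt :: "nat \<Rightarrow> 'a::field list \<Rightarrow> ('a \<Rightarrow> 'a) \<Rightarrow> 'a mat \<Rightarrow> bool" where
  "is_matrix_wrt q bs \<sigma> M \<longleftrightarrow> M \<in> carrier_mat (length bs) (length bs) \<and>
     (\<forall>i<length bs. \<forall>j<length bs. M $$ (i, j) \<in> Fq q) \<and>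
     (\<forall>j<length bs. \<sigma> (bs ! j) = (\<Sum>i<length bs. M $$ (i, j) * bs ! i))"

end

theory Submission
  imports Defs "HOL-Computational_Algebra.Computational_Algebra"
begin

lemma hom_sum_on:
  assumes "finite S" "\<forall>x\<in>S. f x \<in> E"
    and "\<forall>x\<in>E. \<forall>y\<in>E. x + y \<in> E \<and> h (x + y) = h x + h y" "0 \<in> E" "h 0 = 0"
  shows "sum f S \<in> E \<and> h (sum f S) = (\<Sum>x\<in>S. h (f x))"
  using assms by (induction S rule: finite_induct) auto

lemma hom_prod_on:
  assumes "finite S" "\<forall>x\<in>S. f x \<in> E"
    and "\<forall>x\<in>E. \<forall>y\<in>E. x * y \<in> E \<and> h (x * y) = h x * h y" "1 \<in> E" "h 1 = 1"
  shows "prod f S \<in> E \<and> h (prod f S) = (\<Prod>x\<in>S. h (f x))"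
  using assms by (induction S rule: finite_induct) auto

lemma det_map_on:
  fixes A :: "'a::comm_ring_1 mat"
  assumes A: "A \<in> carrier_mat n n" and AE: "\<forall>i<n. \<forall>j<n. A $$ (i,j) \<in> E"
    and add: "\<forall>x\<in>E. \<forall>y\<in>E. x + y \<in> E \<and> h (x + y) = h x + h y"
    and mul: "\<forall>x\<in>E. \<forall>y\<in>E. x * y \<in> E \<and> h (x * y) = h x * h y"
    and one: "1 \<in> E" "h 1 = 1" and mone: "-1 \<in> E" "h (-1) = -1"
  shows "det (map_mat h A) = h (det A)"
proof -
  have z: "0 \<in> E" using add one mone by (metis add.right_inverse)
  have hz: "h 0 = 0" using add one mone by (metis add.right_inverse)
  have sg: "of_int (sign p) \<in> E \<and> h (of_int (sign p)) = of_int (sign p)" for p :: "nat \<Rightarrow> nat"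
    using one mone by (auto simp: sign_def)
  have MA: "map_mat h A \<in> carrier_mat n n" using A by auto
  have trm: "(of_int (sign p) * (\<Prod>i = 0..<n. A $$ (i, p i))) \<in> E \<and>
     h (of_int (sign p) * (\<Prod>i = 0..<n. A $$ (i, p i))) = of_int (sign p) * (\<Prod>i = 0..<n. h (A $$ (i, p i)))"
    if "p permutes {0..<n}" for p
  proof -
    have pi: "\<forall>i\<in>{0..<n}. A $$ (i, p i) \<in> E"
      using AE that by (simp add: permutes_in_image)
    from hom_prod_on[OF _ pi mul one] have
      "(\<Prod>i = 0..<n. A $$ (i, p i)) \<in> E \<and> h (\<Prod>i = 0..<n. A $$ (i, p i)) = (\<Prod>i = 0..<n. h (A $$ (i, p i)))"
      by simp
    then show ?thesis using sg[of p] mul by metis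
  qed
  have fin: "finite {p. p permutes {0..<n}}" by (simp add: finite_permutations)
  have "h (det A) = (\<Sum>p | p permutes {0..<n}. h (of_int (sign p) * (\<Prod>i = 0..<n. A $$ (i, p i))))"
    unfolding det_def'[OF A]
    using hom_sum_on[OF fin _ add z hz, of "\<lambda>p. of_int (sign p) * (\<Prod>i = 0..<n. A $$ (i, p i))"] trm by auto
  also have "\<dots> = det (map_mat h A)"
    unfolding det_def'[OF MA] using A trm by (intro sum.cong) (auto simp: permutes_in_image)
  finally show ?thesis by simp
qed

lemma frob_add:
  fixes x y :: "'a::comm_ring_1"
  assumes "prime p" "CHAR('a) = p" "q = p ^ k"
  shows "(x + y) ^ (q ^ i) = x ^ (q ^ i) + y ^ (q ^ i)"
  using freshmans_dream'[of "q^i" "k*i" x y] assms by (simp add: power_mult)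

lemma frob_sum:
  fixes f :: "'b \<Rightarrow> 'a::comm_ring_1"
  assumes "prime p" "CHAR('a) = p" "q = p ^ k"
  shows "(sum f S) ^ (q ^ i) = (\<Sum>x\<in>S. f x ^ (q ^ i))"
  using freshmans_dream_sum'[of "q^i" "k*i" f S] assms by (simp add: power_mult)

lemma frob_minus:
  fixes x y :: "'a::comm_ring_1"
  assumes "prime p" "CHAR('a) = p" "q = p ^ k"
  shows "(x - y) ^ (q ^ i) = x ^ (q ^ i) - y ^ (q ^ i)"
  using frob_add[OF assms, of "x - y" y i] by (simp add: algebra_simps)

lemma Fq_pow:
  assumes "c \<in> Fq q" shows "c ^ (q ^ i) = c"
proof (induction i)
  case (Suc i)
  have "c ^ (q ^ Suc i) = (c ^ q) ^ (q ^ i)" by (simp add: power_mult[symmetric] mult.commute)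
  then show ?case using assms Suc by (simp add: Fq_def)
qed simp


lemma poly_qpoly: "poly (qpoly a q n) x = (\<Sum>i\<le>n. a i * x ^ (q ^ i))"
  by (simp add: qpoly_def poly_sum poly_monom)

lemma coeff_qpoly_pow:
  assumes "q \<ge> 2" "i \<le> n"
  shows "coeff (qpoly a q n) (q ^ i) = a i"
proof -
  have "coeff (qpoly a q n) (q ^ i) = (\<Sum>j\<le>n. if j = i then a j else 0)"
    unfolding qpoly_def coeff_sum coeff_monom
    using assms by (intro sum.cong) (auto simp: power_inject_exp)
  then show ?thesis using assms by simp
qed

lemma degree_qpoly:
  assumes "q \<ge> 2" "a n \<noteq> 0"
  shows "degree (qpoly a q n) = q ^ n" "qpoly a q n \<noteq> 0"
proof -
  have le: "degree (qpoly a q n) \<le> q ^ n"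
    unfolding qpoly_def
  proof (rule degree_sum_le)
    fix i assume "i \<in> {..n}"
    then have "q ^ i \<le> q ^ n" using assms by (simp add: power_increasing)
    then show "degree (monom (a i) (q ^ i)) \<le> q ^ n"
      by (meson degree_monom_le order_trans)
  qed simp
  have c: "coeff (qpoly a q n) (q ^ n) \<noteq> 0" using coeff_qpoly_pow[OF assms(1) order_refl, of a] assms by simp
  then show "qpoly a q n \<noteq> 0" by auto
  from c have "q ^ n \<le> degree (qpoly a q n)" by (rule le_degree)
  with le show "degree (qpoly a q n) = q ^ n" by simp
qed

lemma qlin:
  fixes c :: "nat \<Rightarrow> 'a::field"
  assumes "prime p" "CHAR('a) = p" "q = p ^ k" "finite J" "\<forall>j\<in>J. c j \<in> Fq q"
  shows "(\<Sum>i\<in>I. w i * (\<Sum>j\<in>J. c j * b j) ^ (q ^ i)) = (\<Sum>j\<in>J. c j * (\<Sum>i\<in>I. w i * b j ^ (q ^ i)))"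
proof -
  have "(\<Sum>j\<in>J. c j * b j) ^ (q ^ i) = (\<Sum>j\<in>J. c j * b j ^ (q ^ i))" for i
    unfolding frob_sum[OF assms(1-3)] using assms(5)
    by (intro sum.cong) (auto simp: power_mult_distrib Fq_pow)
  then have "(\<Sum>i\<in>I. w i * (\<Sum>j\<in>J. c j * b j) ^ (q ^ i)) = (\<Sum>i\<in>I. \<Sum>j\<in>J. c j * (w i * b j ^ (q ^ i)))"
    by (simp add: sum_distrib_left algebra_simps)
  also have "\<dots> = (\<Sum>j\<in>J. c j * (\<Sum>i\<in>I. w i * b j ^ (q ^ i)))"
    by (subst sum.swap) (simp add: sum_distrib_left)
  finally show ?thesis .
qed


lemma poly_lin_mult: "poly ([:- s, 1:] * P) x = (x - s) * poly (P :: 'a::field poly) x"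
proof -
  have "poly ([:- s, 1:] * P) x = poly [:- s, 1:] x * poly P x" by (rule poly_mult)
  moreover have "poly [:- s, 1:] x = x - s" by simp
  ultimately show ?thesis by simp
qed

lemma poly_lin_cons: "poly (prod_list (map (\<lambda>r. [:- r, 1:]) (s # rs))) (x::'a::field) = (x - s) * poly (prod_list (map (\<lambda>r. [:- r, 1:]) rs)) x"
  by (simp only: list.map prod_list.Cons poly_lin_mult)

lemma roots_prod_list: "poly (prod_list (map (\<lambda>r. [:- r, 1:]) rs)) (x::'a::field) = 0 \<longleftrightarrow> x \<in> set rs"
proof (induction rs)
  case (Cons s rs)
  show ?case by (simp only: poly_lin_cons mult_eq_0_iff Cons.IH right_minus_eq list.set insert_iff eq_commute[of s x])
qed simp


lemma degree_prod_list_lin: "degree (prod_list (map (\<lambda>r. [:- r, 1:]) rs)) = length rs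
   \<and> prod_list (map (\<lambda>r. [:- r, 1:]) rs) \<noteq> (0 :: 'a::field poly)"
proof (induction rs)
  case (Cons s rs)
  have e: "prod_list (map (\<lambda>r. [:- r, 1:]) (s # rs)) = [:- s, 1:] * prod_list (map (\<lambda>r. [:- r, 1:]) rs)"
    by (simp only: list.map prod_list.Cons)
  have nz: "[:- s, 1:] \<noteq> (0 :: 'a poly)" by simp
  have d1: "degree [:- s, 1:] = (1::nat)" by simp
  have "degree ([:- s, 1:] * prod_list (map (\<lambda>r. [:- r, 1:]) rs)) = 1 + length rs"
    using degree_mult_eq[OF nz, of "prod_list (map (\<lambda>r. [:- r, 1:]) rs)"] Cons.IH d1 by argo
  moreover have "[:- s, 1:] * prod_list (map (\<lambda>r. [:- r, 1:]) rs) \<noteq> 0"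
    using nz Cons.IH by (simp only: mult_eq_0_iff) blast
  ultimately show ?case unfolding e by simp
qed simp

lemma pderiv_lin_cons: "pderiv (prod_list (map (\<lambda>r. [:- r, 1:]) (s # rs))) =
   [:- s, 1:] * pderiv (prod_list (map (\<lambda>r. [:- r, 1:]) rs)) + prod_list (map (\<lambda>r. [:- r, 1:]) rs) * pderiv [:- s, 1:]"
  by (simp only: list.map prod_list.Cons pderiv_mult)

lemma poly_lin: "poly [:- s, 1:] (x::'a::field) = x - s" by simp

lemma poly_pderiv_lin_cons: "poly (pderiv (prod_list (map (\<lambda>r. [:- r, 1:]) (s # rs)))) (x::'a::field) =
   (x - s) * poly (pderiv (prod_list (map (\<lambda>r. [:- r, 1:]) rs))) x + poly (prod_list (map (\<lambda>r. [:- r, 1:]) rs)) x * poly (pderiv [:- s, 1:]) x"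
  by (simp only: pderiv_lin_cons poly_add poly_mult poly_lin)

lemma nondistinct_double_root:
  fixes rs :: "'a::field list"
  assumes "\<not> distinct rs"
  shows "\<exists>r. poly (prod_list (map (\<lambda>r. [:- r, 1:]) rs)) r = 0 \<and>
             poly (pderiv (prod_list (map (\<lambda>r. [:- r, 1:]) rs))) r = 0"
  using assms
proof (induction rs)
  case (Cons s rs)
  show ?case
  proof (cases "s \<in> set rs")
    case True
    then have "poly (prod_list (map (\<lambda>r. [:- r, 1:]) rs)) s = 0" by (simp add: roots_prod_list)
    then show ?thesis
      by (intro exI[of _ s]) (simp only: poly_pderiv_lin_cons poly_lin_cons diff_self mult_zero_left mult_zero_right add_0)
  next
    case False
    with Cons obtain r where r: "poly (prod_list (map (\<lambda>r. [:- r, 1:]) rs)) r = 0"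
          "poly (pderiv (prod_list (map (\<lambda>r. [:- r, 1:]) rs))) r = 0" by auto
    then show ?thesis
      by (intro exI[of _ r]) (simp only: poly_pderiv_lin_cons poly_lin_cons mult_zero_left mult_zero_right add_0 simp_thms)
  qed
qed simp

lemma monom_dvd:
  fixes x :: "'a::field"
  assumes "prime p" "CHAR('a) = p" "q = p ^ k" "q \<ge> 2"
  shows "(monom (1::'a) q - monom 1 1) dvd (monom 1 (q ^ i) - monom 1 1)"
proof (induction i)
  case 0 then show ?case by simp
next
  case (Suc i)
  have ch: "CHAR('a poly) = p" using assms by simp
  obtain r where qr: "q = Suc r" using assms(4) by (cases q) auto
  have e1: "(monom (1::'a) (q^i))^q = monom 1 (q ^ Suc i)" by (simp only: monom_power power_Suc2 power_one)
  have e2: "(monom (1::'a) 1)^q = monom 1 q" by (simp only: monom_power power_one mult_1)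
  have fm: "(monom (1::'a) (q^i) - monom 1 1)^q = (monom 1 (q^i))^q - (monom 1 1)^q"
    using frob_minus[OF assms(1) ch assms(3), of "monom 1 (q ^ i)" "monom 1 1" 1] by (simp only: power_one_right)
  have eq: "monom (1::'a) (q ^ Suc i) - monom 1 1 = (monom 1 (q ^ i) - monom 1 1)^q + (monom 1 q - monom 1 1)"
    unfolding fm e1 e2 by (simp only: add_diff_eq diff_add_cancel)
  have dv: "(monom (1::'a) (q ^ i) - monom 1 1) dvd (monom 1 (q ^ i) - monom 1 1)^q"
  proof -
    have "(monom (1::'a) (q ^ i) - monom 1 1)^q = (monom (1::'a) (q ^ i) - monom 1 1) * (monom (1::'a) (q ^ i) - monom 1 1)^r"
      by (simp only: qr power_Suc)
    then show ?thesis by (simp only: dvd_triv_left)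
  qed
  show ?case unfolding eq by (rule dvd_add[OF dvd_trans[OF Suc.IH dv] dvd_refl])
qed

lemma pderiv_qpoly:
  fixes a :: "nat \<Rightarrow> 'a::field"
  assumes "prime p" "CHAR('a) = p" "q = p ^ k" "k \<ge> 1"
  shows "pderiv (qpoly a q n) = [:a 0:]"
proof (induction n)
  case 0
  then show ?case by (simp add: qpoly_def pderiv_monom monom_0)
next
  case (Suc n)
  have "p dvd q ^ Suc n" using assms by (simp add: dvd_power)
  then have z: "(of_nat (q ^ Suc n) :: 'a) = 0" using assms(2) of_nat_eq_0_iff_char_dvd by blast
  have "qpoly a q (Suc n) = qpoly a q n + monom (a (Suc n)) (q ^ Suc n)"
    by (simp add: qpoly_def)
  then show ?case using Suc z by (simp add: pderiv_add pderiv_monom)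
qed

lemma card_roots_qpoly:
  fixes a :: "nat \<Rightarrow> 'a::field"
  assumes "prime p" "CHAR('a) = p" "q = p ^ k" "k \<ge> 1" "a n = 1" "a 0 \<noteq> 0"
    and "splits (qpoly a q n)"
  shows "finite {x. poly (qpoly a q n) x = 0} \<and> card {x. poly (qpoly a q n) x = 0} = q ^ n"
proof -
  have q2: "q \<ge> 2" using assms prime_ge_2_nat
    by (metis dual_order.trans le_add_diff_inverse less_imp_le_nat power_increasing_iff power_one_right prime_gt_1_nat)
  obtain rs where rs: "qpoly a q n = prod_list (map (\<lambda>r. [:- r, 1:]) rs)"
    using assms(7) unfolding splits_def by blast
  have V: "{x. poly (qpoly a q n) x = 0} = set rs" unfolding rs using roots_prod_list by blast
  have len: "length rs = q ^ n" using degree_prod_list_lin[of rs] degree_qpoly[OF q2, of a n] assms rs by simp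
  have "distinct rs"
  proof (rule ccontr)
    assume "\<not> distinct rs"
    from nondistinct_double_root[OF this] obtain r where
      "poly (pderiv (prod_list (map (\<lambda>r. [:- r, 1:]) rs))) r = 0" by blast
    then show False using pderiv_qpoly[OF assms(1-4), of a n] rs assms(6) by simp
  qed
  then show ?thesis unfolding V using len distinct_card[OF \<open>distinct rs\<close>] by simp
qed

lemma card_Fq:
  fixes a :: "nat \<Rightarrow> 'a::field"
  assumes "prime p" "CHAR('a) = p" "q = p ^ k" "k \<ge> 1" "a n = 1" "a 0 \<noteq> 0" "n \<ge> 1"
    and "splits (qpoly a q n)"
  shows "finite (Fq q :: 'a set) \<and> card (Fq q :: 'a set) = q"
proof -
  have q2: "q \<ge> 2" using assms prime_ge_2_nat
    by (metis dual_order.trans le_add_diff_inverse less_imp_le_nat power_increasing_iff power_one_right prime_gt_1_nat)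
  define L where "L = qpoly a q n"
  define V where "V = {x. poly L x = 0}"
  have cV: "finite V" "card V = q ^ n" using card_roots_qpoly[OF assms(1-6) assms(8)] by (auto simp: V_def L_def)
  define D :: "'a poly" where "D = monom 1 q - monom 1 1"
  have pD: "poly D x = x ^ q - x" for x by (simp add: D_def poly_monom)
  have rD: "{x. poly D x = 0} = Fq q" by (auto simp: pD Fq_def)
  have cD: "coeff D q = 1" using q2 by (simp add: D_def)
  then have Dnz: "D \<noteq> 0" by auto
  have dDle: "degree D \<le> q" unfolding D_def
    by (rule degree_diff_le) (use q2 in \<open>auto intro: order_trans[OF degree_monom_le]\<close>)
  have dD: "degree D = q" using le_degree[of D q] cD dDle by simp
  have finK: "finite (Fq q :: 'a set)" using poly_roots_finite[OF Dnz] rD by simp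
  have cKle: "card (Fq q :: 'a set) \<le> q" using card_poly_roots_bound[OF Dnz] rD dD by simp
  have qn: "q \<le> q ^ n" using power_increasing[of 1 n q] assms(7) q2 by simp
  have "\<not> V \<subseteq> {0}"
  proof
    assume "V \<subseteq> {0}"
    then have "card V \<le> 1" using card_mono[of "{0}" V] by simp
    then show False using cV qn q2 by simp
  qed
  then obtain v where v: "v \<in> V" "v \<noteq> 0" by auto
  define c where "c i = a i * v ^ (q ^ i)" for i
  define Q where "Q = qpoly c q n"
  have pQ: "poly Q x = poly L (v * x)" for x
    by (simp add: Q_def L_def poly_qpoly c_def power_mult_distrib mult.assoc)
  have cn: "c n \<noteq> 0" using assms(5) v by (simp add: c_def)
  have dQ: "degree Q = q ^ n" "Q \<noteq> 0" using degree_qpoly[of q c n, OF q2 cn] by (auto simp: Q_def)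
  have sumc: "(\<Sum>i\<le>n. c i) = 0" using v by (simp add: V_def L_def poly_qpoly c_def)
  have "Q = (\<Sum>i\<le>n. smult (c i) (monom 1 (q ^ i) - monom 1 1))"
  proof -
    have "(\<Sum>i\<le>n. smult (c i) (monom 1 (q ^ i) - monom 1 1)) = (\<Sum>i\<le>n. monom (c i) (q ^ i) - monom (c i) 1)"
      by (simp add: smult_diff_right smult_monom)
    also have "\<dots> = Q - monom (\<Sum>i\<le>n. c i) 1"
      by (simp add: sum_subtractf monom_sum Q_def qpoly_def)
    finally show ?thesis using sumc by simp
  qed
  then have "D dvd Q"
    using monom_dvd[OF assms(1-3) q2] by (auto simp: D_def intro!: dvd_sum dvd_smult)
  then obtain R where QR: "Q = D * R" by (elim dvdE)
  have Rnz: "R \<noteq> 0" using QR dQ by auto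
  have dR: "degree R = q ^ n - q" using degree_mult_eq[OF Dnz Rnz] QR dQ dD by simp
  have sub: "(\<lambda>w. w / v) ` V \<subseteq> {x. poly Q x = 0}" using v by (auto simp: pQ V_def)
  have "card ((\<lambda>w. w / v) ` V) = q ^ n"
    using cV v by (subst card_image) (auto simp: inj_on_def)
  moreover have "{x. poly Q x = 0} \<subseteq> Fq q \<union> {x. poly R x = 0}"
    using rD by (auto simp: QR)
  moreover have "finite {x. poly R x = 0}" using poly_roots_finite[OF Rnz] .
  ultimately have "q ^ n \<le> card (Fq q :: 'a set) + card {x. poly R x = 0}"
    using sub finK
    by (metis (no_types, lifting) card_Un_le card_mono finite_UnI order_trans)
  also have "\<dots> \<le> card (Fq q :: 'a set) + (q ^ n - q)"
    using card_poly_roots_bound[OF Rnz] dR by simp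
  finally have "q \<le> card (Fq q :: 'a set)" using qn by simp
  then show ?thesis using cKle finK by simp
qed

theorem corollary2p4:
  fixes p q k n :: nat and F :: "'a::field set" and a :: "nat \<Rightarrow> 'a"
  assumes "prime p" and "k \<ge> 1" and "q = p ^ k"
    and "CHAR('a) = p"
    and "is_subfield F" and "Fq q \<subseteq> F"
    and "n \<ge> 1" and "\<forall>i\<le>n. a i \<in> F" and "a n = 1" and "a 0 = (-1) ^ n"
    and "splits (qpoly a q n)"
  shows "\<forall>\<sigma>\<in>galois_group (gen_field (F \<union> {x. poly (qpoly a q n) x = 0})) F.
           \<forall>bs M. is_Fq_basis q {x. poly (qpoly a q n) x = 0} bs \<and> is_matrix_wrt q bs \<sigma> M
             \<longrightarrow> det M = 1"
proof (intro ballI allI impI)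
  note pr = assms(1) and ch = assms(4) and qd = assms(3)
  fix \<sigma> bs M
  define L where "L = qpoly a q n"
  define V where "V = {x. poly L x = 0}"
  define E where "E = gen_field (F \<union> V)"
  define K :: "'a set" where "K = Fq q"
  assume \<sigma>: "\<sigma> \<in> galois_group (gen_field (F \<union> {x. poly (qpoly a q n) x = 0})) F"
  assume hb: "is_Fq_basis q {x. poly (qpoly a q n) x = 0} bs \<and> is_matrix_wrt q bs \<sigma> M"
  have q2: "q \<ge> 2" using assms prime_ge_2_nat
    by (metis dual_order.trans le_add_diff_inverse less_imp_le_nat power_increasing_iff power_one_right prime_gt_1_nat)
  have a0: "a 0 \<noteq> 0" using assms(10) by simp
  have cV: "finite V" "card V = q ^ n"
    using card_roots_qpoly[OF pr ch qd assms(2) assms(9) a0 assms(11)] by (auto simp: V_def L_def)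
  have cK: "finite K" "card K = q"
    using card_Fq[OF pr ch qd assms(2) assms(9) a0 assms(7) assms(11)] by (auto simp: K_def)
  have Kdiff: "x - y \<in> K" if "x \<in> K" "y \<in> K" for x y
    using that frob_minus[OF pr ch qd, of x y 1] by (simp add: K_def Fq_def)
  define m where "m = length bs"
  have setV: "set bs \<subseteq> V" and indep: "\<forall>c. (\<forall>i<m. c i \<in> K) \<longrightarrow> (\<Sum>i<m. c i * bs ! i) = 0 \<longrightarrow> (\<forall>i<m. c i = 0)"
    and span: "\<forall>v\<in>V. \<exists>c. (\<forall>i<m. c i \<in> K) \<and> v = (\<Sum>i<m. c i * bs ! i)"
    using hb by (auto simp: is_Fq_basis_def m_def K_def V_def L_def)
  have bsV: "poly L (bs ! j) = 0" if "j < m" for j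
  proof -
    have "bs ! j \<in> set bs" using that by (simp add: m_def)
    then have "bs ! j \<in> V" using setV by blast
    then show ?thesis by (simp add: V_def)
  qed
  have lin: "poly L (\<Sum>j<m. c j * bs ! j) = 0" if "\<forall>j<m. c j \<in> K" for c
  proof -
    have "poly L (\<Sum>j<m. c j * bs ! j) = (\<Sum>j<m. c j * poly L (bs ! j))"
      unfolding L_def poly_qpoly using qlin[OF pr ch qd, where J="{..<m}" and c=c and I="{..n}" and w=a and b="\<lambda>j. bs ! j"] that
      by (simp add: K_def)
    then show ?thesis using bsV by simp
  qed
  define PS where "PS = PiE {..<m} (\<lambda>_. K)"
  define \<Phi> where "\<Phi> c = (\<Sum>j<m. c j * bs ! j)" for c
  have inj: "inj_on \<Phi> PS"
  proof (rule inj_onI)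
    fix c d assume c: "c \<in> PS" and d: "d \<in> PS" and e: "\<Phi> c = \<Phi> d"
    have "(\<Sum>j<m. (c j - d j) * bs ! j) = \<Phi> c - \<Phi> d"
      by (simp add: \<Phi>_def left_diff_distrib sum_subtractf)
    then have "(\<Sum>j<m. (c j - d j) * bs ! j) = 0" using e by simp
    moreover have "\<forall>j<m. c j - d j \<in> K"
    proof (intro allI impI)
      fix j assume "j < m"
      then have "c j \<in> K" "d j \<in> K" using c d unfolding PS_def PiE_iff by auto
      then show "c j - d j \<in> K" by (rule Kdiff)
    qed
    ultimately have z: "\<forall>j<m. c j - d j = 0" using spec[OF indep, of "\<lambda>j. c j - d j"] by blast
    show "c = d"
    proof (rule PiE_ext[OF c[unfolded PS_def] d[unfolded PS_def]])
      fix i assume "i \<in> {..<m}"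
      then show "c i = d i" using z by simp
    qed
  qed
  have img: "\<Phi> ` PS = V"
  proof
    show "\<Phi> ` PS \<subseteq> V"
    proof (rule image_subsetI)
      fix c assume "c \<in> PS"
      then have "\<forall>j<m. c j \<in> K" unfolding PS_def PiE_iff by auto
      then show "\<Phi> c \<in> V" using lin by (simp add: \<Phi>_def V_def)
    qed
    show "V \<subseteq> \<Phi> ` PS"
    proof
      fix v assume "v \<in> V"
      then obtain c where c: "\<forall>i<m. c i \<in> K" "v = (\<Sum>i<m. c i * bs ! i)" using span by blast
      have "restrict c {..<m} \<in> PS" using c by (auto simp: PS_def)
      moreover have "\<Phi> (restrict c {..<m}) = v" using c by (simp add: \<Phi>_def)
      ultimately show "v \<in> \<Phi> ` PS" by blast
    qed
  qed
  have "card PS = q ^ m" using cK by (simp add: PS_def card_PiE)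
  then have "card V = q ^ m" using card_image[OF inj] img by simp
  then have mn: "m = n" using cV q2 power_inject_exp[of q m n] by simp
  have bsn: "bs ! j \<in> V" if "j < n" for j
  proof -
    have "bs ! j \<in> set bs" using that mn by (simp add: m_def)
    then show ?thesis using setV by blast
  qed
  define A where "A = mat n n (\<lambda>(i,j). bs ! j ^ (q ^ i))"
  have Ac: "A \<in> carrier_mat n n" by (simp add: A_def)
  have Aij: "A $$ (i,j) = bs ! j ^ (q ^ i)" if "i < n" "j < n" for i j using that by (simp add: A_def)
  have detnz: "det A \<noteq> 0"
  proof
    assume "det A = 0"
    then have "det (transpose_mat A) = 0" using det_transpose[OF Ac] by simp
    moreover have "transpose_mat A \<in> carrier_mat n n" using Ac by simp
    ultimately obtain v where v: "v \<in> carrier_vec n" "v \<noteq> 0\<^sub>v n" "transpose_mat A *\<^sub>v v = 0\<^sub>v n"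
      using det_0_iff_vec_prod_zero by blast
    define P where "P = (\<Sum>i<n. monom (v $ i) (q ^ i))"
    have pP: "poly P x = (\<Sum>i<n. v $ i * x ^ (q ^ i))" for x by (simp add: P_def poly_sum poly_monom)
    have Pb: "poly P (bs ! j) = 0" if "j < n" for j
    proof -
      have "(transpose_mat A *\<^sub>v v) $ j = 0" using v(3) that by simp
      moreover have "(transpose_mat A *\<^sub>v v) $ j = (\<Sum>i<n. A $$ (i, j) * v $ i)"
        using that v(1) Ac by (simp add: scalar_prod_def atLeast0LessThan)
      moreover have "(\<Sum>i<n. A $$ (i, j) * v $ i) = poly P (bs ! j)"
        unfolding pP using that by (intro sum.cong) (auto simp: Aij mult.commute)
      ultimately show ?thesis by simp
    qed
    have PV: "V \<subseteq> {x. poly P x = 0}"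
    proof
      fix x assume "x \<in> V"
      then obtain c where c: "c \<in> PS" "x = \<Phi> c" using img by blast
      then have cK': "\<forall>j<m. c j \<in> K" unfolding PS_def PiE_iff by auto
      have "poly P x = (\<Sum>j<m. c j * poly P (bs ! j))"
        unfolding pP c(2) \<Phi>_def using qlin[OF pr ch qd, where J="{..<m}" and c=c and I="{..<n}" and w="\<lambda>i. v $ i" and b="\<lambda>j. bs ! j"] cK'
        by (simp add: K_def)
      also have "\<dots> = 0" using Pb mn by simp
      finally show "x \<in> {x. poly P x = 0}" by simp
    qed
    obtain i where i: "i < n" "v $ i \<noteq> 0"
    proof -
      have "\<not> (\<forall>i<n. v $ i = 0)"
      proof
        assume "\<forall>i<n. v $ i = 0"
        then have "v = 0\<^sub>v n" using v(1) by (intro eq_vecI) auto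
        then show False using v(2) by simp
      qed
      then show ?thesis using that by blast
    qed
    have "coeff P (q ^ i) = (\<Sum>j<n. if j = i then v $ j else 0)"
      unfolding P_def coeff_sum coeff_monom using q2 by (intro sum.cong) (auto simp: power_inject_exp)
    then have "coeff P (q ^ i) = v $ i" using i by simp
    then have Pnz: "P \<noteq> 0" using i by auto
    have dP: "degree P \<le> q ^ (n - 1)" unfolding P_def
    proof (rule degree_sum_le)
      fix j assume "j \<in> {..<n}"
      then have "q ^ j \<le> q ^ (n - 1)" using q2 by (intro power_increasing) auto
      then show "degree (monom (v $ j) (q ^ j)) \<le> q ^ (n - 1)"
        by (meson degree_monom_le order_trans)
    qed simp
    have "card V \<le> card {x. poly P x = 0}" using PV poly_roots_finite[OF Pnz] by (rule card_mono[rotated])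
    also have "\<dots> \<le> q ^ (n - 1)" using card_poly_roots_bound[OF Pnz] dP by simp
    also have "\<dots> < q ^ n" using q2 assms(7) by (intro power_strict_increasing) auto
    finally show False using cV by simp
  qed
  define C where "C = mat n n (\<lambda>(i,j). if i < n - 1 then (if j = i + 1 then 1 else 0) else - a j)"
  have Cc: "C \<in> carrier_mat n n" by (simp add: C_def)
  have CA: "map_mat (\<lambda>x. x ^ q) A = C * A"
  proof (rule eq_matI)
    fix i j assume ij: "i < dim_row (C * A)" "j < dim_col (C * A)"
    then have i: "i < n" "j < n" by (simp_all add: C_def A_def)
    have "(C * A) $$ (i,j) = (\<Sum>k<n. C $$ (i,k) * A $$ (k,j))"
      using i Cc Ac by (simp add: scalar_prod_def atLeast0LessThan)
    also have "\<dots> = bs ! j ^ (q ^ Suc i)"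
    proof (cases "i < n - 1")
      case True
      have "(\<Sum>k<n. C $$ (i,k) * A $$ (k,j)) = (\<Sum>k<n. if k = i + 1 then A $$ (k, j) else 0)"
        using True i by (intro sum.cong) (auto simp: C_def)
      also have "\<dots> = A $$ (i+1, j)" using True by simp
      also have "\<dots> = bs ! j ^ (q ^ Suc i)" using True i by (simp add: Aij)
      finally show ?thesis .
    next
      case False
      then have ni: "Suc i = n" using i by simp
      have "(\<Sum>k<n. C $$ (i,k) * A $$ (k,j)) = (\<Sum>k<n. - (a k * bs ! j ^ (q ^ k)))"
        using False i by (intro sum.cong) (auto simp: C_def Aij)
      also have "\<dots> = - (\<Sum>k<n. a k * bs ! j ^ (q ^ k))" by (simp add: sum_negf)
      also have "\<dots> = bs ! j ^ (q ^ n)"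
      proof -
        have "0 = poly L (bs ! j)" using bsV[of j] i mn by simp
        also have "\<dots> = (\<Sum>k<n. a k * bs ! j ^ (q ^ k)) + bs ! j ^ (q ^ n)"
          by (simp add: L_def poly_qpoly lessThan_Suc_atMost[symmetric] assms(9))
        finally show ?thesis by (metis add.commute add_eq_0_iff2 minus_equation_iff)
      qed
      finally show ?thesis using ni by simp
    qed
    also have "\<dots> = map_mat (\<lambda>x. x ^ q) A $$ (i,j)"
      using i by (simp add: A_def power_mult[symmetric] mult.commute)
    finally show "map_mat (\<lambda>x. x ^ q) A $$ (i,j) = (C * A) $$ (i,j)" by simp
  qed (simp_all add: C_def A_def)
  have detC: "det C = 1"
  proof -
    obtain n' where n': "n = Suc n'" using assms(7) by (cases n) auto
    have "det C = (\<Sum>i<n. C $$ (i,0) * cofactor C i 0)"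
      using laplace_expansion_column[OF Cc, of 0] n' by simp
    also have "\<dots> = C $$ (n',0) * cofactor C n' 0"
      unfolding n' lessThan_Suc using n' by (simp add: C_def)
    also have "mat_delete C n' 0 = 1\<^sub>m n'"
      by (rule eq_matI) (auto simp: mat_delete_def C_def n')
    then have "cofactor C n' 0 = (-1) ^ n'" by (simp add: cofactor_def)
    also have "C $$ (n', 0) = - a 0" using n' by (simp add: C_def)
    finally have "det C = - a 0 * (-1) ^ n'" by simp
    also have "\<dots> = (-1) ^ n' * (-1) ^ n'" using assms(10) n' by simp
    also have "\<dots> = 1" by (simp add: power_add[symmetric] )
    finally show ?thesis .
  qed
  have m1: "(-1 :: 'a) ^ q = -1"
  proof -
    have "(1 + (-1::'a)) ^ (q ^ 1) = 1 ^ (q ^ 1) + (-1) ^ (q ^ 1)" by (rule frob_add[OF pr ch qd])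
    then have "1 + (-1::'a) ^ q = 0" using q2 by (simp add: power_0_left)
    then show ?thesis by (metis add.commute add_eq_0_iff2 minus_equation_iff)
  qed
  have "det (map_mat (\<lambda>x. x ^ q) A) = det A ^ q"
    by (rule det_map_on[OF Ac, where E=UNIV]) (use frob_add[OF pr ch qd, where i=1] m1 in \<open>auto simp: power_mult_distrib\<close>)
  moreover have "det (C * A) = det A" using det_mult[OF Cc Ac] detC by simp
  ultimately have "det A ^ q = det A" using CA by simp
  then have "det A \<in> Fq q" by (simp add: Fq_def)
  then have detF: "det A \<in> F" using assms(6) by blast
  have sF: "0 \<in> F" "1 \<in> F" "\<And>x y. x \<in> F \<Longrightarrow> y \<in> F \<Longrightarrow> x - y \<in> F"
    using assms(5) unfolding is_subfield_def by auto
  have mF: "-1 \<in> F" using sF(3)[OF sF(1) sF(2)] by simp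
  have Esub: "x \<in> E" if "x \<in> F \<union> V" for x
    using that unfolding E_def gen_field_def by blast
  have Eadd: "x + y \<in> E" "x * y \<in> E" if "x \<in> E" "y \<in> E" for x y
    using that unfolding E_def gen_field_def is_subfield_def by blast+
  have Ed: "gen_field (F \<union> {x. poly (qpoly a q n) x = 0}) = E" by (simp add: E_def V_def L_def)
  have shom: "\<forall>x\<in>E. \<forall>y\<in>E. \<sigma> (x + y) = \<sigma> x + \<sigma> y \<and> \<sigma> (x * y) = \<sigma> x * \<sigma> y"
    and sfix: "\<forall>x\<in>F. \<sigma> x = x"
    using \<sigma> unfolding Ed galois_group_def by auto
  have Epow: "x ^ e \<in> E \<and> \<sigma> (x ^ e) = \<sigma> x ^ e" if "x \<in> E" for x e
  proof (induction e)
    case 0 then show ?case using Esub sF(2) sfix by auto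
  next
    case (Suc e) then show ?case using Eadd shom that by simp
  qed
  have Mc: "M \<in> carrier_mat n n" and MK: "\<forall>i<n. \<forall>j<n. M $$ (i,j) \<in> K"
    and Mb: "\<forall>j<n. \<sigma> (bs ! j) = (\<Sum>i<n. M $$ (i, j) * bs ! i)"
    using hb mn unfolding is_matrix_wrt_def m_def K_def by auto
  have AE: "\<forall>i<n. \<forall>j<n. A $$ (i,j) \<in> E" using Aij Epow Esub bsn by auto
  have SA: "map_mat \<sigma> A = A * M"
  proof (rule eq_matI)
    fix i j assume ij: "i < dim_row (A * M)" "j < dim_col (A * M)"
    then have i: "i < n" "j < n" using Mc by (simp_all add: A_def)
    have "(A * M) $$ (i,j) = (\<Sum>k<n. A $$ (i,k) * M $$ (k,j))"
      using i Mc Ac by (simp add: scalar_prod_def atLeast0LessThan)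
    also have "\<dots> = (\<Sum>k<n. (M $$ (k,j) * bs ! k) ^ (q ^ i))"
      using i MK by (intro sum.cong) (auto simp: Aij power_mult_distrib Fq_pow K_def mult.commute)
    also have "\<dots> = (\<sigma> (bs ! j)) ^ (q ^ i)" using Mb i by (simp add: frob_sum[OF pr ch qd])
    also have "\<dots> = \<sigma> (A $$ (i,j))" using Epow Esub bsn i by (simp add: Aij)
    finally show "map_mat \<sigma> A $$ (i,j) = (A * M) $$ (i,j)" using i by (simp add: A_def)
  qed (use Mc in \<open>simp_all add: A_def\<close>)
  have "det (map_mat \<sigma> A) = \<sigma> (det A)"
    by (rule det_map_on[OF Ac AE]) (use shom Eadd Esub sF(2) mF sfix in auto)
  then have "det A * det M = det A" using SA det_mult[OF Ac Mc] detF sfix by simp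
  then show "det M = 1" using detnz by simp
qed

end
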